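(* Let $N,n,m,p$ be positive integers, $A\in\mathbb{R}^{n\times n}$, $B\in\mathbb{R}^{n\times p}$, $C\in\mathbb{R}^{m\times n}$, $H\in\mathbb{R}^{n\times m}$, $W=[w_{ij}]\in\mathbb{R}^{N\times N}$ with $w_{ii}=0$ for all $i$, $\Delta=\mathrm{diag}(\delta_1,\dots,\delta_N)$ with $\delta_i\in\{0,1\}$, and $h>0$. Put $\mathcal{B}(h)=\int_0^h e^{A\tau}d\tau\,B$, $\mathcal{H}(h)=\int_0^h e^{A\tau}d\tau\,HC$, $\Phi_s=I_N\otimes e^{Ah}+W\otimes\mathcal{H}(h)$, $\Psi_s=\Delta\otimes\mathcal{B}(h)$. Let $\sigma(W)=\{\lambda_1,\dots,\lambda_r\}$ be the distinct eigenvalues of $W$ and $E_i=e^{Ah}+\lambda_i\mathcal{H}(h)$, and assume $0\notin\sigma(E_i)$ for every $i=1,\dots,r$. If the networked sampled-data system $X(k+1)=\Phi_sX(k)+\Psi_sU(k)$ is controllable, then the pair $(W,\Delta)$ is controllable and the pair $(E_i,\mathcal{B}(h))$ is controllable for every $i=1,\dots,r$.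
   Context: The networked sampled-data system is the discrete-time system $X(k+1)=\Phi_sX(k)+\Psi_sU(k)$; it is called controllable if every initial state can be steered to the origin in finitely many steps. For $F\in\mathbb{C}^{q\times q}$, $G\in\mathbb{C}^{q\times s}$, the pair $(F,G)$ is called controllable if $\mathrm{rank}[sI_q-F,\ G]=q$ for every $s\in\mathbb{C}$. $\sigma(\cdot)$ denotes the set of eigenvalues and $\otimes$ the Kronecker product. *)

theory Defs
  imports "HOL-Analysis.Analysis"
begin

(* Matrices are rendered as 'a^'cols^'rows (HOL-Analysis); dimensions are finite index types. *)

definition mpow :: "real^'n^'n \<Rightarrow> nat \<Rightarrow> real^'n^'n" where
  "mpow A k = (((**) A) ^^ k) (mat 1)"

(* matrix exponential e^A = sum_k A^k / k! *)
definition mexp :: "real^'n^'n \<Rightarrow> real^'n^'n" where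
  "mexp A = (\<Sum>k. (1 / fact k) *\<^sub>R mpow A k)"

(* int_0^h e^{A tau} d tau *)
definition mexp_int :: "real^'n^'n \<Rightarrow> real \<Rightarrow> real^'n^'n" where
  "mexp_int A h = integral {0..h} (\<lambda>\<tau>. mexp (\<tau> *\<^sub>R A))"

(* Kronecker product *)
definition kron :: "'r::times^'b^'a \<Rightarrow> 'r^'d^'c \<Rightarrow> 'r^('b \<times> 'd)^('a \<times> 'c)" where
  "kron X Y = (\<chi> ik jl. X $ fst ik $ fst jl * Y $ snd ik $ snd jl)"

definition cmat :: "real^'b^'a \<Rightarrow> complex^'b^'a" where
  "cmat X = (\<chi> i j. complex_of_real (X $ i $ j))"

(* scalar multiple of a matrix *)
definition smat :: "'r::times \<Rightarrow> 'r^'b^'a \<Rightarrow> 'r^'b^'a" where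
  "smat c X = (\<chi> i j. c * X $ i $ j)"

(* horizontal block concatenation [F, G] *)
definition hcat :: "'r^'b^'a \<Rightarrow> 'r^'c^'a \<Rightarrow> 'r^('b + 'c)^'a" where
  "hcat F G = (\<chi> i j. case j of Inl j' \<Rightarrow> F $ i $ j' | Inr j' \<Rightarrow> G $ i $ j')"

(* (F,G) controllable: rank [sI - F, G] = q for all complex s *)
definition ctrb_pair :: "complex^'q^'q \<Rightarrow> complex^'s^'q \<Rightarrow> bool" where
  "ctrb_pair F G \<longleftrightarrow> (\<forall>s::complex. rank (hcat (mat s - F) G) = CARD('q))"

(* set of eigenvalues of a complex square matrix *)
definition spectrum :: "complex^'n^'n \<Rightarrow> complex set" where
  "spectrum M = {c. \<exists>v. v \<noteq> 0 \<and> M *v v = c *s v}"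

(* trajectory of X(k+1) = Phi X(k) + Psi U(k) *)
primrec dtraj :: "real^'x^'x \<Rightarrow> real^'u^'x \<Rightarrow> real^'x \<Rightarrow> (nat \<Rightarrow> real^'u) \<Rightarrow> nat \<Rightarrow> real^'x" where
  "dtraj Phi Psi X0 U 0 = X0"
| "dtraj Phi Psi X0 U (Suc k) = Phi *v dtraj Phi Psi X0 U k + Psi *v U k"

(* controllable: every initial state can be steered to the origin in finitely many steps *)
definition dctrb :: "real^'x^'x \<Rightarrow> real^'u^'x \<Rightarrow> bool" where
  "dctrb Phi Psi \<longleftrightarrow> (\<forall>X0. \<exists>k U. dtraj Phi Psi X0 U k = 0)"

end

theory Submission imports Defs begin


lemma rank_full_if_inj:
  fixes M :: "'a::field^'n^'m"
  assumes inj0: "\<forall>y. y v* M = 0 \<longrightarrow> y = 0"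
  shows "rank M = CARD('m)"
proof -
  let ?f = "(*v) (transpose M)"
  have vp: "finite_dimensional_vector_space_pair_1 ((*s) :: 'a \<Rightarrow> 'a^'m \<Rightarrow> 'a^'m) cart_basis ((*s) :: 'a \<Rightarrow> 'a^'n \<Rightarrow> 'a^'n)"
    by unfold_locales
  have lin: "Vector_Spaces.linear (*s) (*s) ?f" by (rule matrix_vector_mul_linear_gen)
  have inj: "inj ?f" using inj0 by (simp add: vec.inj_iff_eq_0)
  have ax: "?f (axis i 1) = row i M" for i
  proof -
    have "(\<Sum>k\<in>UNIV. axis i 1 $ k * M $ k $ j) = M $ i $ j" for j
    proof -
      have "(\<Sum>k\<in>UNIV. axis i 1 $ k * M $ k $ j) = (\<Sum>k\<in>UNIV. if k = i then M $ i $ j else 0)"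
        by (rule sum.cong) (auto simp: axis_def)
      then show ?thesis by simp
    qed
    then show ?thesis by (simp add: vec_eq_iff row_def vector_matrix_mult_def)
  qed
  have img: "?f ` cart_basis = rows M"
    unfolding cart_basis_def rows_def Setcompr_eq_image image_image ax by simp
  have "vec.dim (?f ` cart_basis) = vec.dim (cart_basis :: ('a^'m) set)"
    by (rule finite_dimensional_vector_space_pair_1.dim_image_eq[OF vp lin]) (use inj in \<open>auto simp: inj_on_def\<close>)
  also have "\<dots> = CARD('m)"
    by (metis vec.dim_eq_card_independent independent_cart_basis card_cart_basis)
  finally show ?thesis using img by (simp add: row_rank_def_gen)
qed


lemma left_right_kernel:
  fixes M :: "'a::field^'n^'n"
  shows "(\<exists>y. y \<noteq> 0 \<and> y v* M = 0) \<longleftrightarrow> (\<exists>x. x \<noteq> 0 \<and> M *v x = 0)"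
proof -
  have e1: "(\<forall>y. transpose M *v y = 0 \<longrightarrow> y = 0) \<longleftrightarrow> (\<exists>B. B ** transpose M = mat 1)"
    using matrix_left_invertible_ker[of "transpose M"] by simp
  have e2: "(\<exists>B. B ** transpose M = mat 1) \<longleftrightarrow> (\<exists>B. M ** B = mat 1)" by (rule left_invertible_transpose)
  have e3: "(\<exists>B. M ** B = mat 1) \<longleftrightarrow> (\<exists>B. B ** M = mat 1)"
    using matrix_left_right_inverse1[of M] matrix_left_right_inverse1[of _ M] by blast
  have e4: "(\<exists>B. B ** M = mat 1) \<longleftrightarrow> (\<forall>x. M *v x = 0 \<longrightarrow> x = 0)" by (rule matrix_left_invertible_ker)
  have "(\<forall>y. y v* M = 0 \<longrightarrow> y = 0) \<longleftrightarrow> (\<forall>x. M *v x = 0 \<longrightarrow> x = 0)"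
    using e1 e2 e3 e4 by simp
  then show ?thesis by blast
qed

lemma left_surj:
  fixes M :: "'a::field^'n^'n"
  assumes "\<forall>x. M *v x = 0 \<longrightarrow> x = 0"
  shows "\<exists>B. \<forall>y. (y v* B) v* M = y"
proof -
  have "\<exists>B. B ** M = mat 1" using assms by (subst matrix_left_invertible_ker)
  then obtain B where B: "B ** M = mat 1" by blast
  have "(y v* B) v* M = y" for y
    by (simp add: vector_matrix_mul_assoc B)
  then show ?thesis by blast
qed
lemma hcat_left:
  fixes F :: "'a::comm_ring_1^'b^'q" and G :: "'a^'c^'q"
  shows "(y v* hcat F G) $ Inl j = (y v* F) $ j" "(y v* hcat F G) $ Inr k = (y v* G) $ k"
  by (simp_all add: hcat_def vector_matrix_mult_def)

lemma rank_fail: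
  fixes F :: "complex^'q^'q" and G :: "complex^'c^'q"
  assumes "rank (hcat F G) \<noteq> CARD('q)"
  shows "\<exists>y. y \<noteq> 0 \<and> y v* F = 0 \<and> y v* G = 0"
proof -
  obtain y where y: "y \<noteq> 0" "y v* hcat F G = 0" using rank_full_if_inj assms by blast
  have "y v* F = 0" using y(2) hcat_left(1)[of y F G] by (simp add: vec_eq_iff)
  moreover have "y v* G = 0" using y(2) hcat_left(2)[of y F G] by (simp add: vec_eq_iff)
  ultimately show ?thesis using y by blast
qed

lemma vm_mat: "(y::'a::comm_ring_1^'n) v* mat s = s *s y"
  by (simp add: vec_eq_iff vector_matrix_mult_def mat_def if_distrib cong: if_cong)

lemma vm_diff: "(y::'a::comm_ring_1^'n) v* (P - Q) = y v* P - y v* (Q::'a^'m^'n)"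
  by (simp add: vec_eq_iff vector_matrix_mult_def sum_subtractf algebra_simps)

lemma vm_add: "(y::'a::comm_ring_1^'n) v* (P + Q) = y v* P + y v* (Q::'a^'m^'n)"
  by (simp add: vec_eq_iff vector_matrix_mult_def sum.distrib algebra_simps)

lemma vm_smat: "(y::'a::comm_ring_1^'n) v* smat c (Q::'a^'m^'n) = c *s (y v* Q)"
  by (simp add: vec_eq_iff vector_matrix_mult_def smat_def sum_distrib_left algebra_simps)

lemma scal_vm: "((c::'a::comm_ring_1) *s y) v* (Q::'a^'m^'n) = c *s (y v* Q)"
  by (simp add: vec_eq_iff vector_matrix_mult_def sum_distrib_left algebra_simps)

lemma mv_mat: "(mat s :: 'a::comm_ring_1^'n^'n) *v x = s *s x"
proof -
  have "(\<Sum>j\<in>UNIV. (if i = j then s else 0) * x $ j) = s * x $ i" for i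
  proof -
    have "(\<Sum>j\<in>UNIV. (if i = j then s else 0) * x $ j) = (\<Sum>j\<in>UNIV. if i = j then s * x $ j else 0)"
      by (rule sum.cong) auto
    then show ?thesis by simp
  qed
  then show ?thesis by (simp add: vec_eq_iff matrix_vector_mult_def mat_def)
qed

lemma mv_diff: "(P - Q :: 'a::comm_ring_1^'m^'n) *v x = P *v x - Q *v x"
  by (simp add: vec_eq_iff matrix_vector_mult_def sum_subtractf algebra_simps)

lemma cmat_add: "cmat (P + Q) = cmat P + cmat Q"
  by (simp add: vec_eq_iff cmat_def)

lemma cmat_one: "cmat (mat 1) = mat 1"
  by (simp add: vec_eq_iff cmat_def mat_def)

definition ipc :: "complex^'a \<Rightarrow> real^'a \<Rightarrow> complex" where
  "ipc v X = (\<Sum>i\<in>UNIV. v $ i * complex_of_real (X $ i))"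

definition kv :: "complex^'a \<Rightarrow> complex^'c \<Rightarrow> complex^('a\<times>'c)" where
  "kv x y = (\<chi> ij. x $ fst ij * y $ snd ij)"

lemma kv_kron: "kv x y v* cmat (kron X Y) = kv (x v* cmat X) (y v* cmat Y)"
proof -
  have "(\<Sum>p\<in>UNIV. kv x y $ p * cmat (kron X Y) $ p $ q) =
        (\<Sum>i\<in>UNIV. x $ i * cmat X $ i $ fst q) * (\<Sum>a\<in>UNIV. y $ a * cmat Y $ a $ snd q)" for q
  proof -
    have "(\<Sum>p\<in>UNIV. kv x y $ p * cmat (kron X Y) $ p $ q) =
          (\<Sum>p\<in>UNIV\<times>UNIV. (x $ fst p * cmat X $ fst p $ fst q) * (y $ snd p * cmat Y $ snd p $ snd q))"
      by (simp add: UNIV_Times_UNIV cmat_def kron_def kv_def mult_ac)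
    also have "\<dots> = (\<Sum>i\<in>UNIV. x $ i * cmat X $ i $ fst q) * (\<Sum>a\<in>UNIV. y $ a * cmat Y $ a $ snd q)"
      by (simp add: sum_product sum.cartesian_product case_prod_unfold)
    finally show ?thesis .
  qed
  note key = this
  show ?thesis
  proof (subst vec_eq_iff, intro allI)
    fix q
    have "(kv x y v* cmat (kron X Y)) $ q = (\<Sum>p\<in>UNIV. kv x y $ p * cmat (kron X Y) $ p $ q)"
      by (simp only: vector_matrix_mult_def vec_lambda_beta)
    also have "\<dots> = (\<Sum>i\<in>UNIV. x $ i * cmat X $ i $ fst q) * (\<Sum>a\<in>UNIV. y $ a * cmat Y $ a $ snd q)"
      by (rule key)
    also have "\<dots> = kv (x v* cmat X) (y v* cmat Y) $ q"
      by (simp only: vector_matrix_mult_def vec_lambda_beta kv_def)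
    finally show "(kv x y v* cmat (kron X Y)) $ q = kv (x v* cmat X) (y v* cmat Y) $ q" .
  qed
qed

lemma kv_add2: "kv x y + kv x z = kv x (y + z)"
  by (simp add: vec_eq_iff kv_def algebra_simps)
lemma kv_scal: "kv (c *s x) y = kv x (c *s y)"
  by (simp add: vec_eq_iff kv_def algebra_simps)
lemma kv_zero: "kv 0 y = 0" "kv x 0 = 0"
  by (simp_all add: vec_eq_iff kv_def)
lemma kv_nz: assumes "x \<noteq> 0" "y \<noteq> 0" shows "kv x y \<noteq> 0"
proof -
  obtain i a where "x $ i \<noteq> 0" "y $ a \<noteq> 0" using assms by (metis vec_eq_iff zero_index)
  then have "kv x y $ (i,a) \<noteq> 0" by (simp add: kv_def)
  then show ?thesis by auto
qed

lemma ip_mv: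
  fixes M :: "real^'m^'n"
  shows "(\<Sum>i\<in>UNIV. y $ i * complex_of_real ((M *v x) $ i)) =
         (\<Sum>j\<in>UNIV. (y v* cmat M) $ j * complex_of_real (x $ j))"
proof -
  have "(\<Sum>i\<in>UNIV. y $ i * complex_of_real ((M *v x) $ i)) =
        (\<Sum>i\<in>UNIV. \<Sum>j\<in>UNIV. y $ i * (complex_of_real (M $ i $ j) * complex_of_real (x $ j)))"
    by (simp add: matrix_vector_mult_def sum_distrib_left)
  also have "\<dots> = (\<Sum>j\<in>UNIV. \<Sum>i\<in>UNIV. y $ i * (complex_of_real (M $ i $ j) * complex_of_real (x $ j)))"
    by (rule sum.swap)
  also have "\<dots> = (\<Sum>j\<in>UNIV. (\<Sum>i\<in>UNIV. y $ i * complex_of_real (M $ i $ j)) * complex_of_real (x $ j))"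
    by (simp add: sum_distrib_right mult.assoc)
  also have "\<dots> = (\<Sum>j\<in>UNIV. (y v* cmat M) $ j * complex_of_real (x $ j))"
    by (simp add: vector_matrix_mult_def cmat_def)
  finally show ?thesis .
qed

lemma no_ctrb:
  fixes Phi :: "real^'x^'x" and Psi :: "real^'u^'x" and w :: "nat \<Rightarrow> complex^'x"
  assumes w0: "w 0 \<noteq> 0" and ws: "\<forall>k. w (Suc k) v* cmat Phi = w k"
    and wp: "\<forall>k. w k v* cmat Psi = 0"
  shows "\<not> dctrb Phi Psi"
proof
  assume c: "dctrb Phi Psi"
  obtain i0 where i0: "w 0 $ i0 \<noteq> 0" using w0 by (metis vec_eq_iff zero_index)
  define X0 :: "real^'x" where "X0 = axis i0 1"
  obtain k U where kU: "dtraj Phi Psi X0 U k = 0" using c unfolding dctrb_def by blast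
  have "ipc (w j) (dtraj Phi Psi X0 U j) = ipc (w 0) X0" for j
  proof (induction j)
    case 0 then show ?case by simp
  next
    case (Suc j)
    have "ipc (w (Suc j)) (dtraj Phi Psi X0 U (Suc j)) =
          ipc (w (Suc j)) (Phi *v dtraj Phi Psi X0 U j) + ipc (w (Suc j)) (Psi *v U j)"
      by (simp add: ipc_def sum.distrib algebra_simps)
    also have "\<dots> = ipc (w (Suc j) v* cmat Phi) (dtraj Phi Psi X0 U j) + ipc (w (Suc j) v* cmat Psi) (U j)"
      unfolding ipc_def by (simp only: ip_mv)
    also have "\<dots> = ipc (w j) (dtraj Phi Psi X0 U j)" using ws wp by (simp add: ipc_def)
    finally show ?case using Suc by simp
  qed
  from this[of k] kU have "ipc (w 0) X0 = 0" by (simp add: ipc_def)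
  moreover have "ipc (w 0) X0 = w 0 $ i0"
    by (simp add: ipc_def X0_def axis_def if_distrib cong: if_cong)
  ultimately show False using i0 by simp
qed


lemma kronK:
  fixes E0 :: "real^'n^'n" and Hm :: "real^'n^'n" and W :: "real^'N^'N" and D :: "real^'N^'N"
    and Bm :: "real^'p^'n" and y :: "complex^'N" and eta :: "nat \<Rightarrow> complex^'n"
  assumes y0: "y \<noteq> 0" and yW: "y v* cmat W = s *s y" and eta0: "eta 0 \<noteq> 0"
    and etas: "\<forall>k. eta (Suc k) v* (cmat E0 + smat s (cmat Hm)) = eta k"
    and zero: "y v* cmat D = 0 \<or> (\<forall>k. eta k v* cmat Bm = 0)"
  shows "\<not> dctrb (kron (mat 1 :: real^'N^'N) E0 + kron W Hm) (kron D Bm)"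
proof (rule no_ctrb[where w = "\<lambda>k. kv y (eta k)"])
  show "kv y (eta 0) \<noteq> 0" using kv_nz y0 eta0 by blast
  show "\<forall>k. kv y (eta (Suc k)) v* cmat (kron (mat 1 :: real^'N^'N) E0 + kron W Hm) = kv y (eta k)"
  proof
    fix k
    have "kv y (eta (Suc k)) v* cmat (kron (mat 1 :: real^'N^'N) E0 + kron W Hm)
        = kv y (eta (Suc k) v* cmat E0) + kv (s *s y) (eta (Suc k) v* cmat Hm)"
      by (simp add: cmat_add vm_add kv_kron cmat_one yW)
    also have "\<dots> = kv y (eta (Suc k) v* (cmat E0 + smat s (cmat Hm)))"
      by (simp add: kv_scal kv_add2 vm_add vm_smat)
    also have "\<dots> = kv y (eta k)" using etas by simp
    finally show "kv y (eta (Suc k)) v* cmat (kron (mat 1 :: real^'N^'N) E0 + kron W Hm) = kv y (eta k)" .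
  qed
  show "\<forall>k. kv y (eta k) v* cmat (kron D Bm) = 0"
    using zero by (auto simp: kv_kron kv_zero)
qed

theorem corollary2:
  fixes A :: "real^'n^'n" and B :: "real^'p^'n" and C :: "real^'n^'m"
    and H :: "real^'m^'n" and W :: "real^'N^'N" and \<delta> :: "'N \<Rightarrow> real" and h :: real
  assumes W_diag: "\<forall>i. W $ i $ i = 0"
    and \<delta>01: "\<forall>i. \<delta> i \<in> {0, 1}"
    and h_pos: "h > 0"
    and E_inv: "\<forall>\<mu>\<in>spectrum (cmat W).
                  0 \<notin> spectrum (cmat (mexp (h *\<^sub>R A)) + smat \<mu> (cmat (mexp_int A h ** H ** C)))"
    and ctrb: "dctrb (kron (mat 1 :: real^'N^'N) (mexp (h *\<^sub>R A)) + kron W (mexp_int A h ** H ** C))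
                     (kron (\<chi> i j. if i = j then \<delta> i else 0) (mexp_int A h ** B))"
  shows "ctrb_pair (cmat W) (cmat (\<chi> i j. if i = j then \<delta> i else 0 :: real^'N^'N))
       \<and> (\<forall>\<mu>\<in>spectrum (cmat W).
            ctrb_pair (cmat (mexp (h *\<^sub>R A)) + smat \<mu> (cmat (mexp_int A h ** H ** C)))
                      (cmat (mexp_int A h ** B)))"
proof -
  define E0 where "E0 = mexp (h *\<^sub>R A)"
  define Hm where "Hm = mexp_int A h ** H ** C"
  define Bm where "Bm = mexp_int A h ** B"
  define D :: "real^'N^'N" where "D = (\<chi> i j. if i = j then \<delta> i else 0)"
  note ctrb' = ctrb[folded E0_def Hm_def Bm_def D_def]
  note E_inv' = E_inv[folded E0_def Hm_def]
  have inj_E: "\<forall>x. (cmat E0 + smat \<mu> (cmat Hm)) *v x = 0 \<longrightarrow> x = 0" if "\<mu> \<in> spectrum (cmat W)" for \<mu>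
    using E_inv' that unfolding spectrum_def by auto
  have P1: "ctrb_pair (cmat W) (cmat D)"
    unfolding ctrb_pair_def
  proof
    fix s :: complex
    show "rank (hcat (mat s - cmat W) (cmat D)) = CARD('N)"
    proof (rule ccontr)
      assume "rank (hcat (mat s - cmat W) (cmat D)) \<noteq> CARD('N)"
      then obtain y where y: "y \<noteq> 0" "y v* (mat s - cmat W) = 0" "y v* cmat D = 0"
        using rank_fail by blast
      have yW: "y v* cmat W = s *s y" using y(2) by (simp add: vm_diff vm_mat)
      obtain x where x: "x \<noteq> 0" "(mat s - cmat W) *v x = 0"
        using y left_right_kernel by blast
      have "cmat W *v x = s *s x" using x(2) by (simp add: mv_diff mv_mat)
      then have sp: "s \<in> spectrum (cmat W)" using x(1) unfolding spectrum_def by blast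
      obtain Bi where Bi: "\<forall>z. (z v* Bi) v* (cmat E0 + smat s (cmat Hm)) = z"
        using left_surj[OF inj_E[OF sp]] by blast
      obtain a0 :: 'n where True by blast
      define eta where "eta k = ((\<lambda>z. z v* Bi) ^^ k) (axis a0 1)" for k
      have "\<not> dctrb (kron (mat 1 :: real^'N^'N) E0 + kron W Hm) (kron D Bm)"
      proof (rule kronK[OF y(1) yW])
        show "eta 0 \<noteq> 0" by (simp add: eta_def axis_eq_0_iff)
        show "\<forall>k. eta (Suc k) v* (cmat E0 + smat s (cmat Hm)) = eta k"
          using Bi by (simp add: eta_def)
        show "y v* cmat D = 0 \<or> (\<forall>k. eta k v* cmat Bm = 0)" using y(3) by simp
      qed
      then show False using ctrb' by simp
    qed
  qed
  have P2: "ctrb_pair (cmat E0 + smat \<mu> (cmat Hm)) (cmat Bm)" if mu: "\<mu> \<in> spectrum (cmat W)" for \<mu>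
    unfolding ctrb_pair_def
  proof
    fix t :: complex
    show "rank (hcat (mat t - (cmat E0 + smat \<mu> (cmat Hm))) (cmat Bm)) = CARD('n)"
    proof (rule ccontr)
      assume "rank (hcat (mat t - (cmat E0 + smat \<mu> (cmat Hm))) (cmat Bm)) \<noteq> CARD('n)"
      then obtain e where e: "e \<noteq> 0" "e v* (mat t - (cmat E0 + smat \<mu> (cmat Hm))) = 0" "e v* cmat Bm = 0"
        using rank_fail by blast
      have eE: "e v* (cmat E0 + smat \<mu> (cmat Hm)) = t *s e" using e(2) by (simp add: vm_diff vm_mat)
      obtain x where x: "x \<noteq> 0" "cmat W *v x = \<mu> *s x" using mu unfolding spectrum_def by blast
      have "(mat \<mu> - cmat W) *v x = 0" using x(2) by (simp add: mv_diff mv_mat)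
      then obtain y where y: "y \<noteq> 0" "y v* (mat \<mu> - cmat W) = 0"
        using x(1) left_right_kernel by blast
      have yW: "y v* cmat W = \<mu> *s y" using y(2) by (simp add: vm_diff vm_mat)
      have t0: "t \<noteq> 0"
      proof
        assume "t = 0"
        then have "e v* (cmat E0 + smat \<mu> (cmat Hm)) = 0" using eE by simp
        then obtain z where "z \<noteq> 0" "(cmat E0 + smat \<mu> (cmat Hm)) *v z = 0"
          using e(1) left_right_kernel by blast
        then show False using inj_E[OF mu] by blast
      qed
      define eta where "eta k = (inverse t ^ k) *s e" for k
      have "\<not> dctrb (kron (mat 1 :: real^'N^'N) E0 + kron W Hm) (kron D Bm)"
      proof (rule kronK[OF y(1) yW])
        show "eta 0 \<noteq> 0" using e(1) by (simp add: eta_def)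
        show "\<forall>k. eta (Suc k) v* (cmat E0 + smat \<mu> (cmat Hm)) = eta k"
          using t0 by (simp add: eta_def scal_vm eE)
        show "y v* cmat D = 0 \<or> (\<forall>k. eta k v* cmat Bm = 0)"
          using e(3) by (simp add: eta_def scal_vm)
      qed
      then show False using ctrb' by simp
    qed
  qed
  show ?thesis using P1 P2 unfolding E0_def Hm_def Bm_def D_def by blast
qed

end
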